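(* Let $k=0$ and let $a$ be a regular scale factor which is an even function on $\mathbb R$, such that either $\infty>\dot a(0^+)>0$, or $\dot a(0)=0$ but $a^{(n)}(0)\ne0$ for some $n$. Then for every $\tau>0$ and every $(x,y,z)$ with $\sqrt{x^2+y^2+z^2}=\rho_{\mathcal M_\tau}$, the $4\times4$ matrix \[ \begin{pmatrix} g_{\tau\tau} & 0 & 0 & 0\\ 0 & 1+\lambda_0(y^2+z^2) & -\lambda_0xy & -\lambda_0xz\\ 0 & -\lambda_0xy & 1+\lambda_0(x^2+z^2) & -\lambda_0yz\\ 0 & -\lambda_0xz & -\lambda_0yz & 1+\lambda_0(x^2+y^2)\end{pmatrix}, \] with $g_{\tau\tau}=g_{\tau\tau}(\tau,\rho_{\mathcal M_\tau})$ and $\lambda_0=\lambda_0(\tau,\rho_{\mathcal M_\tau})$, has rank $2$. Thus the cotangent space at each point of the cosmological-time-zero set is two dimensional.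
   Context: A function $a:[0,\infty)\to[0,\infty)$ is a regular scale factor if: (a) $a(0)=0$; (b) $a$ is increasing and continuous on $[0,\infty)$, twice continuously differentiable on $(0,\infty)$, with an inverse function on $[0,\infty)$; (c) $\frac{a(t)\ddot a(t)}{\dot a(t)^2}\le1$ for all $t>0$ (presupposing $\dot a(t)\ne0$). Here $a$ is regarded on $\mathbb R$ via $a(-t)=a(t)$; $\dot a(0^+)=\lim_{t\to0^+}\dot a(t)$. For $0<s<\tau$, $\chi_s(\tau)=\int_s^\tau\frac{1}{a(t)}\frac{a(\tau)}{\sqrt{a^2(\tau)-a^2(t)}}dt$. For $\tau>0$, $\rho_{\mathcal M_\tau}=\int_0^\tau\frac{a(t)}{\sqrt{a^2(\tau)-a^2(t)}}dt$; for $0<\rho<2\rho_{\mathcal M_\tau}$, $t_0(\tau,\rho)$ is the unique $t_0\in(-\tau,\tau)$ with $\rho=\int_{t_0}^\tau\frac{a(t)}{\sqrt{a^2(\tau)-a^2(t)}}dt$ ($t_0=0$ iff $\rho=\rho_{\mathcal M_\tau}$). Define $f(\tau,t_0)=\int_{t_0}^{\tau}\frac{\ddot a(t)}{\dot a(t)^2}\left(\frac{\sqrt{a^2(\tau)-a^2(t_0)}}{\sqrt{a^2(\tau)-a^2(t)}}-1\right)dt$ for $0\le t_0<\tau$ and $g_{\tau\tau}(\tau,\rho)=-[1-\dot a(\tau)f(\tau,t_0(\tau,\rho))]^2$, so $g_{\tau\tau}(\tau,\rho_{\mathcal M_\tau})=-[1-\dot a(\tau)f(\tau,0)]^2$. For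 $t_0=t_0(\tau,\rho)\ne0$, $g_{\theta\theta}(\tau,\rho)=a^2(t_0)\chi_{|t_0|}(\tau)^2$, and $g_{\theta\theta}(\tau,\rho_{\mathcal M_\tau})$ is the limit as $t_0\to0$. $\lambda_0(\tau,\rho)=\frac{g_{\theta\theta}(\tau,\rho)-\rho^2}{\rho^4}$. The displayed matrix is the extended spatially flat Robertson–Walker metric in Fermi coordinates $(\tau,x,y,z)$ of a comoving observer, with $\rho=\sqrt{x^2+y^2+z^2}$. *)

theory Defs
  imports "HOL-Analysis.Analysis"
begin

text \<open>A function a : real => real; only its values on [0,oo) matter for regularity,
  and it is extended evenly to the reals (a(-t) = a(t)), assumed separately.\<close>

definition regular_scale_factor :: "(real \<Rightarrow> real) \<Rightarrow> bool" where
  "regular_scale_factor a \<longleftrightarrow>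
     a 0 = 0 \<and>
     (\<forall>t\<ge>0. a t \<ge> 0) \<and>
     strict_mono_on {0..} a \<and>
     continuous_on {0..} a \<and>
     (\<forall>t>0. a differentiable at t \<and> deriv a differentiable at t) \<and>
     continuous_on {0<..} (deriv (deriv a)) \<and>
     bij_betw a {0..} {0..} \<and>
     (\<forall>t>0. deriv a t \<noteq> 0 \<and> a t * deriv (deriv a) t / (deriv a t)\<^sup>2 \<le> 1)"

definition has_nth_deriv_at :: "(real \<Rightarrow> real) \<Rightarrow> nat \<Rightarrow> real \<Rightarrow> bool" where
  "has_nth_deriv_at f n x \<longleftrightarrow>
     (\<exists>e>0. \<forall>k < n - 1. \<forall>y \<in> ball x e. (deriv ^^ k) f differentiable at y) \<and>
     (n > 0 \<longrightarrow> (deriv ^^ (n - 1)) f differentiable at x)"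

definition rho_M :: "(real \<Rightarrow> real) \<Rightarrow> real \<Rightarrow> real" where
  "rho_M a \<tau> = integral {0..\<tau>} (\<lambda>t. a t / sqrt ((a \<tau>)\<^sup>2 - (a t)\<^sup>2))"

definition chi :: "(real \<Rightarrow> real) \<Rightarrow> real \<Rightarrow> real \<Rightarrow> real" where
  "chi a s \<tau> = integral {s..\<tau>} (\<lambda>t. (1 / a t) * (a \<tau> / sqrt ((a \<tau>)\<^sup>2 - (a t)\<^sup>2)))"

definition f_fun :: "(real \<Rightarrow> real) \<Rightarrow> real \<Rightarrow> real \<Rightarrow> real" where
  "f_fun a \<tau> t0 = integral {t0..\<tau>}
     (\<lambda>t. deriv (deriv a) t / (deriv a t)\<^sup>2 *
          (sqrt ((a \<tau>)\<^sup>2 - (a t0)\<^sup>2) / sqrt ((a \<tau>)\<^sup>2 - (a t)\<^sup>2) - 1))"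

text \<open>Metric components at rho = rho_M(tau) (where t0 = 0).\<close>
definition g_tautau_M :: "(real \<Rightarrow> real) \<Rightarrow> real \<Rightarrow> real" where
  "g_tautau_M a \<tau> = - (1 - deriv a \<tau> * f_fun a \<tau> 0)\<^sup>2"

definition g_thth_M :: "(real \<Rightarrow> real) \<Rightarrow> real \<Rightarrow> real" where
  "g_thth_M a \<tau> = Lim (at 0) (\<lambda>t0. (a t0)\<^sup>2 * (chi a \<bar>t0\<bar> \<tau>)\<^sup>2)"

definition lambda0_M :: "(real \<Rightarrow> real) \<Rightarrow> real \<Rightarrow> real" where
  "lambda0_M a \<tau> = (g_thth_M a \<tau> - (rho_M a \<tau>)\<^sup>2) / (rho_M a \<tau>) ^ 4"

definition metric_matrix :: "real \<Rightarrow> real \<Rightarrow> real \<Rightarrow> real \<Rightarrow> real \<Rightarrow> real^4^4" where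
  "metric_matrix g l x y z = vector [
     vector [g, 0, 0, 0],
     vector [0, 1 + l * (y\<^sup>2 + z\<^sup>2), - l * x * y, - l * x * z],
     vector [0, - l * x * y, 1 + l * (x\<^sup>2 + z\<^sup>2), - l * y * z],
     vector [0, - l * x * z, - l * y * z, 1 + l * (x\<^sup>2 + y\<^sup>2)]]"

end

theory Submission
  imports Defs
begin


lemma rsf_a0: "regular_scale_factor a \<Longrightarrow> a 0 = 0"
  by (simp add: regular_scale_factor_def)

lemma rsf_mono: "regular_scale_factor a \<Longrightarrow> 0 \<le> s \<Longrightarrow> s < t \<Longrightarrow> a s < a t"
  by (auto simp: regular_scale_factor_def strict_mono_on_def)

lemma rsf_pos: "regular_scale_factor a \<Longrightarrow> 0 < t \<Longrightarrow> 0 < a t"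
  using rsf_mono[of a 0 t] rsf_a0[of a] by simp

lemma rsf_cont: "regular_scale_factor a \<Longrightarrow> continuous_on {0..} a"
  by (simp add: regular_scale_factor_def)

lemma rsf_D1: "regular_scale_factor a \<Longrightarrow> 0 < t \<Longrightarrow> (a has_real_derivative deriv a t) (at t)"
  by (simp add: regular_scale_factor_def DERIV_deriv_iff_real_differentiable)

lemma rsf_D2: "regular_scale_factor a \<Longrightarrow> 0 < t \<Longrightarrow> (deriv a has_real_derivative deriv (deriv a) t) (at t)"
  by (simp add: regular_scale_factor_def DERIV_deriv_iff_real_differentiable)

lemma rsf_dcont: "regular_scale_factor a \<Longrightarrow> continuous_on {0<..} (deriv a)"
  by (intro continuous_at_imp_continuous_on ballI DERIV_isCont[OF rsf_D2]) auto

lemma rsf_ddcont: "regular_scale_factor a \<Longrightarrow> continuous_on {0<..} (deriv (deriv a))"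
  by (simp add: regular_scale_factor_def)

lemma rsf_acont: "regular_scale_factor a \<Longrightarrow> continuous_on {0<..} a"
  using rsf_cont by (rule continuous_on_subset) auto

lemma rsf_dpos: assumes R: "regular_scale_factor a" and t: "0 < t" shows "0 < deriv a t"
proof -
  have ne: "deriv a t \<noteq> 0" using R t by (simp add: regular_scale_factor_def)
  have "\<not> deriv a t < 0"
  proof
    assume "deriv a t < 0"
    from DERIV_neg_dec_right[OF rsf_D1[OF R t] this] obtain d where d: "d > 0"
      "\<And>h. h > 0 \<Longrightarrow> h < d \<Longrightarrow> a (t + h) < a t" by blast
    have "a (t + d/2) < a t" using d by simp
    moreover have "a t < a (t + d/2)" using rsf_mono[OF R, of t "t+d/2"] t d by simp
    ultimately show False by simp
  qed
  with ne show ?thesis by simp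
qed

lemma rsf_cond: assumes R: "regular_scale_factor a" and t: "0 < t"
  shows "a t * deriv (deriv a) t \<le> (deriv a t)\<^sup>2"
proof -
  have "a t * deriv (deriv a) t / (deriv a t)\<^sup>2 \<le> 1" using R t unfolding regular_scale_factor_def by blast
  moreover have "(deriv a t)\<^sup>2 > 0" using rsf_dpos[OF R t] by simp
  ultimately show ?thesis by (simp add: divide_le_eq)
qed

lemma rsf_ratio: assumes R: "regular_scale_factor a" and t: "0 < t" "t \<le> \<tau>"
  shows "deriv a \<tau> / a \<tau> \<le> deriv a t / a t"
proof (rule DERIV_nonpos_imp_nonincreasing[OF t(2)])
  fix x assume x: "t \<le> x" "x \<le> \<tau>"
  then have x0: "0 < x" using t by simp
  have ax: "a x > 0" using rsf_pos[OF R x0] .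
  have "((\<lambda>s. deriv a s / a s) has_real_derivative
      (deriv (deriv a) x * a x - deriv a x * deriv a x) / (a x * a x)) (at x)"
    by (rule DERIV_divide[OF rsf_D2[OF R x0] rsf_D1[OF R x0]]) (use ax in simp)
  moreover have "(deriv (deriv a) x * a x - deriv a x * deriv a x) / (a x * a x) \<le> 0"
    using rsf_cond[OF R x0] ax by (intro divide_nonpos_pos) (auto simp: power2_eq_square algebra_simps)
  ultimately show "\<exists>y. ((\<lambda>s. deriv a s / a s) has_real_derivative y) (at x) \<and> y \<le> 0" by blast
qed

lemma dom_int:
  fixes h g :: "real \<Rightarrow> real"
  assumes "continuous_on {c<..<d} h" "g integrable_on {c..d}"
    "\<And>x. x \<in> {c<..<d} \<Longrightarrow> \<bar>h x\<bar> \<le> g x"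
  shows "h integrable_on {c..d}"
proof -
  have gi: "g integrable_on {c<..<d}" using assms(2) by (simp add: integrable_on_Icc_iff_Ioo)
  have "h integrable_on {c<..<d}"
  proof (rule measurable_bounded_by_integrable_imp_integrable[OF _ gi])
    show "h \<in> borel_measurable (lebesgue_on {c<..<d})"
      by (rule continuous_imp_measurable_on_sets_lebesgue[OF assms(1)]) simp
    show "norm (h x) \<le> g x" if "x \<in> {c<..<d}" for x using assms(3)[OF that] by simp
    show "{c<..<d} \<in> sets lebesgue" by simp
  qed
  then show ?thesis by (simp add: integrable_on_Icc_iff_Ioo)
qed

lemma rsf_nonneg: "regular_scale_factor a \<Longrightarrow> 0 \<le> t \<Longrightarrow> 0 \<le> a t"
  using rsf_pos[of a t] rsf_a0[of a] by (cases "t = 0") auto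

lemma rsf_le: "regular_scale_factor a \<Longrightarrow> 0 \<le> s \<Longrightarrow> s \<le> t \<Longrightarrow> a s \<le> a t"
  using rsf_mono[of a s t] by (cases "s = t") auto

lemma sqrt_div_lemma:
  fixes u A :: real assumes "A > 0"
  shows "sqrt (1 - (u / A)\<^sup>2) = sqrt (A\<^sup>2 - u\<^sup>2) / A"
proof -
  have "1 - (u / A)\<^sup>2 = (A\<^sup>2 - u\<^sup>2) / A\<^sup>2" using assms by (simp add: field_simps)
  then show ?thesis using assms by (simp add: real_sqrt_divide)
qed

lemma rho_int:
  assumes R: "regular_scale_factor a" and tau: "0 < \<tau>"
  shows "(\<lambda>t. a t / sqrt ((a \<tau>)\<^sup>2 - (a t)\<^sup>2)) integrable_on {0..\<tau>}"
proof -
  define A where "A = a \<tau>"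
  define d where "d = deriv a \<tau>"
  have A: "A > 0" using rsf_pos[OF R tau] by (simp add: A_def)
  have d: "d > 0" using rsf_dpos[OF R tau] by (simp add: d_def)
  have lt: "a t < A" "0 \<le> a t" if "0 \<le> t" "t < \<tau>" for t
    using rsf_mono[OF R that] rsf_nonneg[OF R that(1)] by (auto simp: A_def)
  have sq: "(a t)\<^sup>2 < A\<^sup>2" if "0 \<le> t" "t < \<tau>" for t
    using lt[OF that] by (simp add: power_strict_mono)
  define \<Psi> where "\<Psi> t = (A/d) * arcsin (a t / A)" for t
  define D where "D t = (A/d) * (deriv a t / sqrt (A\<^sup>2 - (a t)\<^sup>2))" for t
  have "(D has_integral (\<Psi> \<tau> - \<Psi> 0)) {0..\<tau>}"
  proof (rule fundamental_theorem_of_calculus_interior)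
    show "0 \<le> \<tau>" using tau by simp
    have "continuous_on {0..\<tau>} a" using rsf_cont[OF R] by (rule continuous_on_subset) auto
    moreover have "\<forall>x\<in>{0..\<tau>}. -1 \<le> a x / A \<and> a x / A \<le> 1"
    proof
      fix x assume x: "x \<in> {0..\<tau>}"
      have "0 \<le> a x" "a x \<le> A" using rsf_nonneg[OF R, of x] rsf_le[OF R, of x \<tau>] x by (auto simp: A_def)
      then show "-1 \<le> a x / A \<and> a x / A \<le> 1" using A by (auto simp: divide_le_eq_1 intro: order_trans[of _ 0])
    qed
    ultimately show "continuous_on {0..\<tau>} \<Psi>" unfolding \<Psi>_def using A
      by (intro continuous_intros) auto
  next
    fix x assume x: "x \<in> {0<..<\<tau>}"
    then have x0: "0 < x" and xt: "x < \<tau>" by auto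
    have ax: "0 < a x" using rsf_pos[OF R x0] .
    have r1: "- 1 < a x / A" "a x / A < 1" using ax A lt[of x] x by (auto simp: divide_less_eq_1 intro: less_trans[of _ 0])
    have "(\<Psi> has_real_derivative (A/d) * (inverse (sqrt (1 - (a x / A)\<^sup>2)) * (deriv a x / A))) (at x)"
    proof -
      have "((\<lambda>t. a t / A) has_real_derivative deriv a x / A) (at x)"
        by (intro DERIV_cdivide rsf_D1[OF R x0])
      from DERIV_chain2[OF DERIV_arcsin[OF r1] this]
      show ?thesis unfolding \<Psi>_def by (intro DERIV_cmult) simp
    qed
    moreover have "(A/d) * (inverse (sqrt (1 - (a x / A)\<^sup>2)) * (deriv a x / A)) = D x"
      using A unfolding D_def sqrt_div_lemma[OF A] by (simp add: field_simps)
    ultimately show "(\<Psi> has_vector_derivative D x) (at x)"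
      by (simp add: has_real_derivative_iff_has_vector_derivative)
  qed
  then have Dint: "D integrable_on {0..\<tau>}" by blast
  show ?thesis
  proof (rule dom_int[OF _ Dint])
    have "continuous_on {0<..<\<tau>} a" using rsf_cont[OF R] by (rule continuous_on_subset) auto
    moreover have "\<forall>x\<in>{0<..<\<tau>}. sqrt ((a \<tau>)\<^sup>2 - (a x)\<^sup>2) \<noteq> 0"
    proof
      fix x assume "x \<in> {0<..<\<tau>}"
      then have "(a x)\<^sup>2 < (a \<tau>)\<^sup>2" using sq[of x] by (simp add: A_def)
      then show "sqrt ((a \<tau>)\<^sup>2 - (a x)\<^sup>2) \<noteq> 0" by simp
    qed
    ultimately show "continuous_on {0<..<\<tau>} (\<lambda>t. a t / sqrt ((a \<tau>)\<^sup>2 - (a t)\<^sup>2))"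
      by (intro continuous_intros) auto
  next
    fix x assume x: "x \<in> {0<..<\<tau>}"
    then have x0: "0 < x" and xt: "x < \<tau>" by auto
    have ax: "0 < a x" using rsf_pos[OF R x0] .
    have s0: "sqrt (A\<^sup>2 - (a x)\<^sup>2) > 0" using sq[of x] x by simp
    have rat: "d / A \<le> deriv a x / a x" using rsf_ratio[OF R x0] xt by (simp add: A_def d_def)
    then have "a x * d \<le> A * deriv a x" using ax A by (simp add: field_simps)
    then have "a x \<le> (A/d) * deriv a x" using d by (simp add: field_simps)
    then have "a x / sqrt (A\<^sup>2 - (a x)\<^sup>2) \<le> ((A/d) * deriv a x) / sqrt (A\<^sup>2 - (a x)\<^sup>2)"
      using s0 by (intro divide_right_mono) simp_all
    then have "a x / sqrt (A\<^sup>2 - (a x)\<^sup>2) \<le> D x" unfolding D_def by simp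
    then show "\<bar>a x / sqrt ((a \<tau>)\<^sup>2 - (a x)\<^sup>2)\<bar> \<le> D x" using ax s0 by (simp add: A_def)
  qed
qed

lemma rho_pos:
  assumes R: "regular_scale_factor a" and tau: "0 < \<tau>"
  shows "rho_M a \<tau> > 0"
proof -
  define F where "F t = a t / sqrt ((a \<tau>)\<^sup>2 - (a t)\<^sup>2)" for t
  define A where "A = a \<tau>"
  have A: "A > 0" using rsf_pos[OF R tau] by (simp add: A_def)
  have Fint: "F integrable_on {0..\<tau>}" using rho_int[OF R tau] by (simp add: F_def[abs_def])
  have Fnn: "\<forall>t\<in>{0..\<tau>}. 0 \<le> F t"
  proof
    fix t assume t: "t \<in> {0..\<tau>}"
    have "0 \<le> a t" "a t \<le> a \<tau>" using rsf_nonneg[OF R, of t] rsf_le[OF R, of t \<tau>] t by auto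
    then have "0 \<le> a t" "(a t)\<^sup>2 \<le> (a \<tau>)\<^sup>2" by (auto simp: power_mono)
    then show "0 \<le> F t" unfolding F_def by (simp add: divide_nonneg_nonneg)
  qed
  have sub: "{\<tau>/4..\<tau>/2} \<subseteq> {0..\<tau>}" using tau by auto
  have Fint2: "F integrable_on {\<tau>/4..\<tau>/2}" using integrable_on_subinterval[OF Fint sub] .
  have lb: "a (\<tau>/4) / A \<le> F t" if t: "t \<in> {\<tau>/4..\<tau>/2}" for t
  proof -
    have t0: "0 < t" "t < \<tau>" using t tau by auto
    have at: "0 < a t" "a t < A" using rsf_pos[OF R t0(1)] rsf_mono[OF R _ t0(2)] t0 by (auto simp: A_def)
    have a4: "a (\<tau>/4) \<le> a t" using rsf_le[OF R, of "\<tau>/4" t] t tau by auto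
    have sq: "(a t)\<^sup>2 < A\<^sup>2" using at by (simp add: power_strict_mono)
    have r1: "0 < sqrt (A\<^sup>2 - (a t)\<^sup>2)" using sq by simp
    have "sqrt (A\<^sup>2 - (a t)\<^sup>2) \<le> sqrt (A\<^sup>2)" using at by (simp del: real_sqrt_abs)
    then have r2: "sqrt (A\<^sup>2 - (a t)\<^sup>2) \<le> A" using A by simp
    note r = r1 r2
    have "a (\<tau>/4) / A \<le> a t / A" using a4 A by (simp add: divide_right_mono)
    also have "\<dots> \<le> a t / sqrt (A\<^sup>2 - (a t)\<^sup>2)"
      by (rule divide_left_mono[OF r2]) (use at r1 in auto)
    finally show ?thesis by (simp add: F_def A_def)
  qed
  have "integral {\<tau>/4..\<tau>/2} (\<lambda>t. a (\<tau>/4) / A) \<le> integral {\<tau>/4..\<tau>/2} F"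
    by (rule integral_le[OF _ Fint2]) (use lb in auto)
  moreover have "integral {\<tau>/4..\<tau>/2} (\<lambda>t. a (\<tau>/4) / A) > 0"
    using tau A rsf_pos[OF R, of "\<tau>/4"] by simp
  moreover have "integral {\<tau>/4..\<tau>/2} F \<le> integral {0..\<tau>} F"
    by (rule integral_subset_le[OF sub Fint2 Fint Fnn])
  ultimately show ?thesis unfolding rho_M_def F_def[abs_def] by linarith
qed

lemma chi_int:
  assumes R: "regular_scale_factor a" and tau: "0 < \<tau>" and s: "0 < s" "s \<le> \<tau>"
  shows "(\<lambda>t. (1 / a t) * (a \<tau> / sqrt ((a \<tau>)\<^sup>2 - (a t)\<^sup>2))) integrable_on {s..\<tau>}"
proof -
  define F where "F t = a t / sqrt ((a \<tau>)\<^sup>2 - (a t)\<^sup>2)" for t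
  have Fint: "F integrable_on {s..\<tau>}"
    using integrable_on_subinterval[OF rho_int[OF R tau], of s \<tau>] s by (auto simp: F_def[abs_def])
  have as: "0 < a s" using rsf_pos[OF R s(1)] .
  show ?thesis
  proof (rule dom_int)
    show "(\<lambda>t. (a \<tau> / (a s)\<^sup>2) * F t) integrable_on {s..\<tau>}"
      using integrable_on_cmult_left[OF Fint, of "a \<tau> / (a s)\<^sup>2"] by simp
  next
    have "continuous_on {s<..<\<tau>} a" using rsf_cont[OF R] by (rule continuous_on_subset) (use s in auto)
    moreover have "\<forall>x\<in>{s<..<\<tau>}. sqrt ((a \<tau>)\<^sup>2 - (a x)\<^sup>2) \<noteq> 0 \<and> a x \<noteq> 0"
    proof
      fix x assume x: "x \<in> {s<..<\<tau>}"
      then have "0 < a x" "a x < a \<tau>" using rsf_pos[OF R, of x] rsf_mono[OF R, of x \<tau>] s by auto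
      then have "(a x)\<^sup>2 < (a \<tau>)\<^sup>2" by (simp add: power_strict_mono)
      then show "sqrt ((a \<tau>)\<^sup>2 - (a x)\<^sup>2) \<noteq> 0 \<and> a x \<noteq> 0" using \<open>0 < a x\<close> by simp
    qed
    ultimately show "continuous_on {s<..<\<tau>} (\<lambda>t. (1 / a t) * (a \<tau> / sqrt ((a \<tau>)\<^sup>2 - (a t)\<^sup>2)))"
      by (intro continuous_intros) auto
  next
    fix x assume x: "x \<in> {s<..<\<tau>}"
    then have ax: "0 < a x" "a x < a \<tau>" "a s \<le> a x"
      using rsf_pos[OF R, of x] rsf_mono[OF R, of x \<tau>] rsf_le[OF R, of s x] s by auto
    then have r: "0 < sqrt ((a \<tau>)\<^sup>2 - (a x)\<^sup>2)" by (simp add: power_strict_mono)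
    have "(a s)\<^sup>2 \<le> (a x)\<^sup>2" using ax as by (simp add: power_mono)
    then have i: "1 / a x \<le> a x / (a s)\<^sup>2" using ax as by (simp add: field_simps power2_eq_square)
    have "(1 / a x) * (a \<tau> / sqrt ((a \<tau>)\<^sup>2 - (a x)\<^sup>2))
        \<le> (a x / (a s)\<^sup>2) * (a \<tau> / sqrt ((a \<tau>)\<^sup>2 - (a x)\<^sup>2))"
      using i r ax by (intro mult_right_mono) auto
    also have "\<dots> = (a \<tau> / (a s)\<^sup>2) * F x" by (simp add: F_def)
    finally show "\<bar>(1 / a x) * (a \<tau> / sqrt ((a \<tau>)\<^sup>2 - (a x)\<^sup>2))\<bar> \<le> (a \<tau> / (a s)\<^sup>2) * F x"
      using ax r by simp
  qed
qed

lemma chi_bound: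
  assumes R: "regular_scale_factor a" and tau: "0 < \<tau>" and s: "0 < s" "s < \<delta>" "\<delta> \<le> \<tau>/2"
  shows "0 \<le> chi a s \<tau> \<and>
    a s * chi a s \<tau> \<le> \<delta> * (a \<tau> / sqrt ((a \<tau>)\<^sup>2 - (a (\<tau>/2))\<^sup>2)) + a s * chi a \<delta> \<tau>"
proof -
  define u where "u t = (1 / a t) * (a \<tau> / sqrt ((a \<tau>)\<^sup>2 - (a t)\<^sup>2))" for t
  define B where "B = a \<tau> / sqrt ((a \<tau>)\<^sup>2 - (a (\<tau>/2))\<^sup>2)"
  have as: "0 < a s" using rsf_pos[OF R s(1)] .
  have uint: "u integrable_on {s..\<tau>}" using chi_int[OF R tau s(1)] s unfolding u_def by auto
  have unn: "0 \<le> u t" if "t \<in> {s..\<tau>}" for t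
    using rsf_pos[OF R, of t] rsf_nonneg[OF R, of \<tau>] rsf_le[OF R, of t \<tau>] that s unfolding u_def
    by (auto intro!: divide_nonneg_nonneg mult_nonneg_nonneg)
  have c1: "0 \<le> chi a s \<tau>" unfolding chi_def u_def[symmetric]
    by (rule integral_nonneg[OF uint]) (use unn in auto)
  have split: "integral {s..\<delta>} u + integral {\<delta>..\<tau>} u = integral {s..\<tau>} u"
    by (rule Henstock_Kurzweil_Integration.integral_combine) (use s uint in auto)
  have uint1: "u integrable_on {s..\<delta>}" using integrable_on_subinterval[OF uint, of s \<delta>] s by auto
  have ub: "u t \<le> B / a s" if t: "t \<in> {s..\<delta>}" for t
  proof -
    have t0: "0 < t" "t \<le> \<tau>/2" using t s by auto
    have at: "0 < a t" "a s \<le> a t" "a t \<le> a (\<tau>/2)"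
      using rsf_pos[OF R t0(1)] rsf_le[OF R, of s t] rsf_le[OF R, of t "\<tau>/2"] t0 t s by auto
    have a2: "a (\<tau>/2) < a \<tau>" "0 < a (\<tau>/2)" using rsf_mono[OF R, of "\<tau>/2" \<tau>] rsf_pos[OF R, of "\<tau>/2"] tau by auto
    have r2: "0 < sqrt ((a \<tau>)\<^sup>2 - (a (\<tau>/2))\<^sup>2)" using a2 by (simp add: power_strict_mono)
    have "(a t)\<^sup>2 \<le> (a (\<tau>/2))\<^sup>2" using at by (simp add: power_mono)
    then have rr: "sqrt ((a \<tau>)\<^sup>2 - (a (\<tau>/2))\<^sup>2) \<le> sqrt ((a \<tau>)\<^sup>2 - (a t)\<^sup>2)" by simp
    have i1: "1 / a t \<le> 1 / a s" using at as by (simp add: frac_le)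
    have i2: "a \<tau> / sqrt ((a \<tau>)\<^sup>2 - (a t)\<^sup>2) \<le> B"
      unfolding B_def using rr r2 a2 by (intro divide_left_mono) auto
    have "u t \<le> (1 / a s) * B" unfolding u_def
      using i1 i2 at a2 as by (intro mult_mono) auto
    then show ?thesis by simp
  qed
  have "integral {s..\<delta>} u \<le> integral {s..\<delta>} (\<lambda>t. B / a s)"
    by (rule integral_le[OF uint1]) (use ub in auto)
  also have "\<dots> = (\<delta> - s) * (B / a s)" using s by simp
  finally have "a s * integral {s..\<delta>} u \<le> (\<delta> - s) * B" using as by (simp add: field_simps)
  moreover have "(\<delta> - s) * B \<le> \<delta> * B"
  proof -
    have "a (\<tau>/2) \<le> a \<tau>" "0 \<le> a (\<tau>/2)" using rsf_le[OF R, of "\<tau>/2" \<tau>] rsf_nonneg[OF R, of "\<tau>/2"] tau by auto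
    then have "(a (\<tau>/2))\<^sup>2 \<le> (a \<tau>)\<^sup>2" by (simp add: power_mono)
    then have "0 \<le> B" unfolding B_def using rsf_nonneg[OF R, of \<tau>] tau by (simp add: divide_nonneg_nonneg)
    then show ?thesis using s by (simp add: mult_right_mono)
  qed
  ultimately have "a s * chi a s \<tau> \<le> \<delta> * B + a s * chi a \<delta> \<tau>"
    unfolding chi_def u_def[symmetric] split[symmetric] by (simp add: distrib_left)
  then show ?thesis using c1 by (simp add: B_def)
qed

lemma l322: fixes B e :: real assumes "0 \<le> B" "0 < e" shows "e / (2 * (B + 1)) * B < e / 2"
proof -
  have "B / (B + 1) < 1" using assms by simp
  then have "e / 2 * (B / (B + 1)) < e / 2 * 1" using assms by (intro mult_strict_left_mono) auto
  moreover have "e / (2 * (B + 1)) * B = e / 2 * (B / (B + 1))" by simp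
  ultimately show ?thesis by simp
qed
lemma l349: fixes C e :: real assumes "0 < e" shows "e / (2 * (\<bar>C\<bar> + 1)) * \<bar>C\<bar> < e / 2"
  using l322[of "\<bar>C\<bar>" e] assms by simp
lemma l353: fixes P e :: real assumes "0 \<le> P" "P < e" "e \<le> 1" shows "P\<^sup>2 \<le> P"
proof -
  have "P * P \<le> P * 1" using assms by (intro mult_left_mono) auto
  then show ?thesis by (simp add: power2_eq_square)
qed

lemma gthth_zero:
  assumes R: "regular_scale_factor a" and ev: "\<forall>t. a (- t) = a t" and tau: "0 < \<tau>"
  shows "g_thth_M a \<tau> = 0"
proof -
  define \<phi> where "\<phi> t0 = (a t0)\<^sup>2 * (chi a \<bar>t0\<bar> \<tau>)\<^sup>2" for t0
  define B where "B = a \<tau> / sqrt ((a \<tau>)\<^sup>2 - (a (\<tau>/2))\<^sup>2)"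
  have B: "0 \<le> B"
  proof -
    have "a (\<tau>/2) \<le> a \<tau>" "0 \<le> a (\<tau>/2)" using rsf_le[OF R, of "\<tau>/2" \<tau>] rsf_nonneg[OF R, of "\<tau>/2"] tau by auto
    then have "(a (\<tau>/2))\<^sup>2 \<le> (a \<tau>)\<^sup>2" by (simp add: power_mono)
    then show "0 \<le> B" unfolding B_def using rsf_nonneg[OF R, of \<tau>] tau by (simp add: divide_nonneg_nonneg)
  qed
  have "(\<phi> \<longlongrightarrow> 0) (at 0)"
    unfolding LIM_eq
  proof (intro allI impI)
    fix r :: real assume r: "0 < r"
    define \<epsilon> where "\<epsilon> = min 1 r"
    have e: "0 < \<epsilon>" "\<epsilon> \<le> 1" "\<epsilon> \<le> r" using r by (auto simp: \<epsilon>_def)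
    define \<delta> where "\<delta> = min (\<tau>/2) (\<epsilon> / (2 * (B + 1)))"
    have d1: "0 < \<delta>" using tau e B unfolding \<delta>_def by (auto intro: add_pos_nonneg)
    have d2: "\<delta> \<le> \<tau>/2" unfolding \<delta>_def by (rule min.cobounded1)
    note d = d1 d2
    have dB: "\<delta> * B < \<epsilon> / 2"
    proof -
      have "\<delta> * B \<le> (\<epsilon> / (2 * (B + 1))) * B" using B by (intro mult_right_mono) (auto simp: \<delta>_def)
      also have "\<dots> < \<epsilon> / 2" using l322[OF B e(1)] .
      finally show ?thesis .
    qed
    define C where "C = chi a \<delta> \<tau>"
    define e2 where "e2 = \<epsilon> / (2 * (\<bar>C\<bar> + 1))"
    have e2: "0 < e2" using e by (simp add: e2_def add_pos_nonneg)
    have "\<forall>x\<in>{0..}. \<forall>e>0. \<exists>d>0. \<forall>x'\<in>{0..}. dist x' x < d \<longrightarrow> dist (a x') (a x) < e"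
      using rsf_cont[OF R] unfolding continuous_on_iff .
    then have "\<forall>e>0. \<exists>d>0. \<forall>x'\<in>{0::real..}. dist x' 0 < d \<longrightarrow> dist (a x') (a 0) < e"
      by (rule bspec) simp
    then obtain \<eta> where eta0: "\<eta> > 0" and eta1: "\<forall>x'\<in>{0::real..}. dist x' 0 < \<eta> \<longrightarrow> dist (a x') (a 0) < e2"
      using e2 by blast
    have eta: "\<eta> > 0" "\<And>s. s \<in> {0..} \<Longrightarrow> dist s 0 < \<eta> \<Longrightarrow> dist (a s) (a 0) < e2"
      using eta0 eta1 by auto
    show "\<exists>s>0. \<forall>x. x \<noteq> 0 \<and> norm (x - 0) < s \<longrightarrow> norm (\<phi> x - 0) < r"
    proof (intro exI[of _ "min \<eta> \<delta>"] conjI allI impI)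
      show "0 < min \<eta> \<delta>" using eta d by simp
      fix x :: real assume x: "x \<noteq> 0 \<and> norm (x - 0) < min \<eta> \<delta>"
      define s where "s = \<bar>x\<bar>"
      have s: "0 < s" "s < \<delta>" "s < \<eta>" using x by (auto simp: s_def)
      have ax: "a x = a s" using ev[rule_format, of x] unfolding s_def by (cases "x < 0") auto
      have as: "0 < a s" using rsf_pos[OF R s(1)] .
      have as2: "a s < e2" using eta(2)[of s] s rsf_a0[OF R] as by auto
      have cb: "0 \<le> chi a s \<tau>" "a s * chi a s \<tau> \<le> \<delta> * B + a s * C"
        using chi_bound[OF R tau s(1) s(2) d(2)] by (auto simp: B_def C_def)
      have "a s * C \<le> a s * \<bar>C\<bar>" using as by (simp add: mult_left_mono)
      also have "\<dots> \<le> e2 * \<bar>C\<bar>" using as2 by (simp add: mult_right_mono)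
      also have "\<dots> < \<epsilon> / 2" using l349[OF e(1)] unfolding e2_def .
      finally have P: "a s * chi a s \<tau> < \<epsilon>" using cb dB by linarith
      define P where "P = a s * chi a s \<tau>"
      have P0: "0 \<le> P" using as cb unfolding P_def by simp
      have "P\<^sup>2 \<le> P" using l353[OF P0 _ e(2)] P unfolding P_def by simp
      then have "P\<^sup>2 < r" using P e unfolding P_def by linarith
      moreover have "\<phi> x = P\<^sup>2" unfolding \<phi>_def P_def s_def[symmetric] ax by (simp add: power_mult_distrib)
      ultimately show "norm (\<phi> x - 0) < r" by simp
    qed
  qed
  then have "Lim (at 0) \<phi> = 0" by (intro tendsto_Lim) auto
  then show ?thesis unfolding g_thth_M_def \<phi>_def[abs_def] .
qed



lemma Phi_deriv:
  fixes a :: "real \<Rightarrow> real"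
  assumes D: "(a has_real_derivative a') (at x)" and r: "0 < A\<^sup>2 - (a x)\<^sup>2" and A: "A > 0"
  shows "((\<lambda>t. a t / (A + sqrt (A\<^sup>2 - (a t)\<^sup>2))) has_real_derivative
     a' * A / (sqrt (A\<^sup>2 - (a x)\<^sup>2) * (A + sqrt (A\<^sup>2 - (a x)\<^sup>2)))) (at x)"
proof -
  define s where "s = sqrt (A\<^sup>2 - (a x)\<^sup>2)"
  have s: "0 < s" "s\<^sup>2 = A\<^sup>2 - (a x)\<^sup>2" using r by (simp_all add: s_def)
  have g: "((\<lambda>t. A\<^sup>2 - (a t)\<^sup>2) has_real_derivative - (2 * a x * a')) (at x)"
  proof -
    have "((\<lambda>t. (a t)^2) has_real_derivative real 2 * (a x)^(2 - 1) * a') (at x)"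
      using DERIV_chain2[OF DERIV_pow D, of 2] by simp
    then have "((\<lambda>t. (a t)^2) has_real_derivative 2 * a x * a') (at x)" by simp
    from DERIV_diff[OF DERIV_const this] show ?thesis by simp
  qed
  have sd: "((\<lambda>t. sqrt (A\<^sup>2 - (a t)\<^sup>2)) has_real_derivative inverse s / 2 * (- (2 * a x * a'))) (at x)"
    using DERIV_chain2[OF DERIV_real_sqrt[OF r] g] by (simp add: s_def)
  have den: "((\<lambda>t. A + sqrt (A\<^sup>2 - (a t)\<^sup>2)) has_real_derivative inverse s / 2 * (- (2 * a x * a'))) (at x)"
    using DERIV_add[OF DERIV_const sd] by simp
  have ne: "A + sqrt (A\<^sup>2 - (a x)\<^sup>2) \<noteq> 0" using s A by (simp add: s_def[symmetric])
  have q: "((\<lambda>t. a t / (A + sqrt (A\<^sup>2 - (a t)\<^sup>2))) has_real_derivative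
     (a' * (A + s) - a x * (inverse s / 2 * (- (2 * a x * a')))) / ((A + s) * (A + s))) (at x)"
    using DERIV_divide[OF D den ne] by (simp add: s_def)
  have e: "(a' * (A + s) - a x * (inverse s / 2 * (- (2 * a x * a')))) / ((A + s) * (A + s))
      = a' * A / (s * (A + s))"
  proof -
    have As: "A + s > 0" using s A by simp
    have "a' * (A + s) - a x * (inverse s / 2 * (- (2 * a x * a'))) = a' * ((A + s) * s + (a x)\<^sup>2) / s"
      using s(1) by (simp add: field_simps power2_eq_square)
    also have "(A + s) * s + (a x)\<^sup>2 = A * (A + s)" using s(2) by (simp add: algebra_simps power2_eq_square)
    finally have "a' * (A + s) - a x * (inverse s / 2 * (- (2 * a x * a'))) = a' * (A * (A + s)) / s" .
    moreover have "a' * (A * (A + s)) / s / ((A + s) * (A + s)) = (a' * A) * (A + s) / ((s * (A + s)) * (A + s))"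
      by (simp add: divide_divide_eq_left mult.assoc mult.left_commute)
    moreover have "(a' * A) * (A + s) / ((s * (A + s)) * (A + s)) = a' * A / (s * (A + s))"
      using As by (rule nonzero_mult_divide_mult_cancel_right[OF order.strict_implies_not_eq[symmetric]])
    ultimately show ?thesis by simp
  qed
  show ?thesis using q[unfolded e] unfolding s_def .
qed

lemma gtt_nonzero:
  assumes R: "regular_scale_factor a" and tau: "0 < \<tau>"
  shows "g_tautau_M a \<tau> \<noteq> 0"
proof -
  define A where "A = a \<tau>"
  define d where "d = deriv a \<tau>"
  have A: "A > 0" using rsf_pos[OF R tau] by (simp add: A_def)
  have d: "d > 0" using rsf_dpos[OF R tau] by (simp add: d_def)
  define r where "r t = sqrt (A\<^sup>2 - (a t)\<^sup>2)" for t
  define p where "p t = deriv (deriv a) t / (deriv a t)\<^sup>2 *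
          (sqrt ((a \<tau>)\<^sup>2 - (a 0)\<^sup>2) / sqrt ((a \<tau>)\<^sup>2 - (a t)\<^sup>2) - 1)" for t
  define k where "k t = deriv a t * A / (r t * (A + r t))" for t
  define \<Phi> where "\<Phi> t = a t / (A + r t)" for t
  have fp: "f_fun a \<tau> 0 = integral {0..\<tau>} p" by (simp add: f_fun_def p_def[abs_def])
  have sA: "sqrt ((a \<tau>)\<^sup>2 - (a 0)\<^sup>2) = A" using rsf_a0[OF R] A by (simp add: A_def)
  have inside: "0 < a t" "a t < A" "0 < r t" "r t < A" "(r t)\<^sup>2 = A\<^sup>2 - (a t)\<^sup>2" "0 < A\<^sup>2 - (a t)\<^sup>2"
    if "0 < t" "t < \<tau>" for t
  proof -
    show at: "0 < a t" "a t < A" using rsf_pos[OF R that(1)] rsf_mono[OF R _ that(2)] that by (auto simp: A_def)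
    then show ps: "0 < A\<^sup>2 - (a t)\<^sup>2" by (simp add: power_strict_mono)
    then show "0 < r t" "(r t)\<^sup>2 = A\<^sup>2 - (a t)\<^sup>2" by (simp_all add: r_def)
    have "A\<^sup>2 - (a t)\<^sup>2 < A\<^sup>2" using at by simp
    then show "r t < A" unfolding r_def using A by (simp add: real_sqrt_less_iff real_less_lsqrt)
  qed
  have rcl: "0 \<le> A\<^sup>2 - (a t)\<^sup>2" if "0 \<le> t" "t \<le> \<tau>" for t
    using rsf_le[OF R that] rsf_nonneg[OF R that(1)] by (simp add: A_def power_mono)
  have kint: "(k has_integral 1) {0..\<tau>}"
  proof -
    have "(k has_integral (\<Phi> \<tau> - \<Phi> 0)) {0..\<tau>}"
    proof (rule fundamental_theorem_of_calculus_interior)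
      show "0 \<le> \<tau>" using tau by simp
      have "continuous_on {0..\<tau>} a" using rsf_cont[OF R] by (rule continuous_on_subset) auto
      moreover have "\<forall>t\<in>{0..\<tau>}. A + r t \<noteq> 0"
      proof
        fix t assume "t \<in> {0..\<tau>}"
        then have "0 \<le> r t" using rcl[of t] unfolding r_def by simp
        then show "A + r t \<noteq> 0" using A by linarith
      qed
      ultimately show "continuous_on {0..\<tau>} \<Phi>" unfolding \<Phi>_def r_def
        by (intro continuous_intros) auto
    next
      fix x assume x: "x \<in> {0<..<\<tau>}"
      have "(\<Phi> has_real_derivative k x) (at x)"
        unfolding \<Phi>_def k_def r_def
        by (rule Phi_deriv[OF rsf_D1[OF R] inside(6) A]) (use x in auto)
      then show "(\<Phi> has_vector_derivative k x) (at x)"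
        by (simp add: has_real_derivative_iff_has_vector_derivative)
    qed
    moreover have "\<Phi> \<tau> = 1" using A by (simp add: \<Phi>_def r_def A_def)
    moreover have "\<Phi> 0 = 0" by (simp add: \<Phi>_def rsf_a0[OF R])
    ultimately show ?thesis by simp
  qed
  define q where "q t = k t - d * p t" for t
  have cmp: "0 \<le> q t \<and> (q t = 0 \<longrightarrow> deriv a t = d * a t / A)" if t: "0 < t" "t < \<tau>" for t
  proof -
    note I = inside[OF t]
    define h where "h = A / r t - 1"
    have h: "0 < h" using I by (simp add: h_def)
    have pt: "p t = deriv (deriv a) t / (deriv a t)\<^sup>2 * h"
      unfolding p_def h_def sA by (simp add: r_def A_def)
    have dt: "0 < deriv a t" using rsf_dpos[OF R t(1)] .
    have c1: "deriv (deriv a) t / (deriv a t)\<^sup>2 \<le> 1 / a t"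
      using rsf_cond[OF R t(1)] I(1) dt by (simp add: field_simps)
    have rat: "d / A \<le> deriv a t / a t" using rsf_ratio[OF R t(1)] t by (simp add: A_def d_def)
    have c2: "d / a t \<le> deriv a t * A / (a t)\<^sup>2"
    proof -
      have "d * a t \<le> deriv a t * A" using rat I(1) A by (simp add: field_simps)
      then show ?thesis using I(1) by (simp add: field_simps power2_eq_square)
    qed
    have kt: "k t = deriv a t * A / (a t)\<^sup>2 * h"
    proof -
      have e: "(a t)\<^sup>2 = (A - r t) * (A + r t)" using I(5) by (simp add: algebra_simps power2_eq_square)
      have Ar: "A - r t \<noteq> 0" using I by simp
      have h': "h = (A - r t) / r t" unfolding h_def using I(3) by (simp add: field_simps)
      have "deriv a t * A / ((A - r t) * (A + r t)) * ((A - r t) / r t)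
          = (deriv a t * A) * (A - r t) / ((r t * (A + r t)) * (A - r t))"
        by (simp add: ac_simps)
      also have "\<dots> = deriv a t * A / (r t * (A + r t))"
        by (rule nonzero_mult_divide_mult_cancel_right[OF Ar])
      finally show ?thesis unfolding k_def h' e by simp
    qed
    have s1: "d * p t \<le> d / a t * h"
    proof -
      have "deriv (deriv a) t / (deriv a t)\<^sup>2 * h \<le> (1 / a t) * h"
        by (rule mult_right_mono[OF c1]) (use h in simp)
      then have "d * (deriv (deriv a) t / (deriv a t)\<^sup>2 * h) \<le> d * ((1 / a t) * h)"
        by (rule mult_left_mono) (use d in simp)
      then show ?thesis unfolding pt by simp
    qed
    have s2: "d / a t * h \<le> k t" unfolding kt by (rule mult_right_mono[OF c2]) (use h in simp)
    have "0 \<le> q t" using s1 s2 by (simp add: q_def)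
    moreover have "deriv a t = d * a t / A" if q0: "q t = 0"
    proof -
      have "d / a t * h = deriv a t * A / (a t)\<^sup>2 * h" using s1 s2 q0 kt by (simp add: q_def)
      moreover have hne: "h \<noteq> 0" using h by simp
      ultimately have "d / a t = deriv a t * A / (a t)\<^sup>2" using mult_right_cancel[OF hne] by blast
      then show ?thesis using I(1) A by (simp add: field_simps power2_eq_square)
    qed
    ultimately show ?thesis by blast
  qed
  show ?thesis
  proof (cases "p integrable_on {0..\<tau>}")
    case False
    then have "f_fun a \<tau> 0 = 0" by (simp add: fp not_integrable_integral)
    then show ?thesis by (simp add: g_tautau_M_def)
  next
    case True
    have "d * f_fun a \<tau> 0 \<noteq> 1"
    proof
      assume df: "d * f_fun a \<tau> 0 = 1"
      have qint: "(q has_integral 0) {0..\<tau>}"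
      proof -
        have "((\<lambda>t. d * p t) has_integral d * f_fun a \<tau> 0) {0..\<tau>}"
          unfolding fp using True by (intro has_integral_mult_right) (simp add: integrable_integral)
        from has_integral_diff[OF kint this] show ?thesis using df by (simp add: q_def[abs_def])
      qed
      define q' where "q' t = (if t \<in> {0<..<\<tau>} then q t else 0)" for t
      have q'int: "(q' has_integral 0) {0..\<tau>}"
        by (rule has_integral_spike_finite[of "{0, \<tau>}" _ _ q]) (auto simp: q'_def intro: qint)
      have q'nn: "\<forall>t\<in>{0..\<tau>}. 0 \<le> q' t" using cmp by (auto simp: q'_def)
      have qz: "q t = 0" if t: "0 < t" "t < \<tau>" for t
      proof -
        define c where "c = t/2"
        define e where "e = (t + \<tau>)/2"
        have ce: "0 < c" "c < t" "t < e" "e < \<tau>" using t by (auto simp: c_def e_def)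
        have sub: "{c..e} \<subseteq> {0..\<tau>}" using ce by auto
        have q'int2: "q' integrable_on {c..e}" using integrable_on_subinterval[OF has_integral_integrable[OF q'int] sub] .
        have "integral {c..e} q' \<le> integral {0..\<tau>} q'"
          by (rule integral_subset_le[OF sub q'int2 has_integral_integrable[OF q'int] q'nn])
        moreover have "0 \<le> integral {c..e} q'" by (rule integral_nonneg[OF q'int2]) (use q'nn sub in auto)
        ultimately have "integral {c..e} q' = 0" using integral_unique[OF q'int] by linarith
        then have hz: "(q' has_integral 0) (cbox c e)" using q'int2 by (metis has_integral_integral box_real(2))
        have cq: "continuous_on {c..e} q'"
        proof -
          have eq: "\<forall>x\<in>{c..e}. q x = q' x" using ce by (auto simp: q'_def)
          have "continuous_on {c..e} q"
          proof -
            have sub0: "{c..e} \<subseteq> {0<..}" using ce by auto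
            have ca: "continuous_on {c..e} a" using rsf_acont[OF R] sub0 by (rule continuous_on_subset)
            have cd: "continuous_on {c..e} (deriv a)" using rsf_dcont[OF R] sub0 by (rule continuous_on_subset)
            have cdd: "continuous_on {c..e} (deriv (deriv a))" using rsf_ddcont[OF R] sub0 by (rule continuous_on_subset)
            have nz: "\<forall>x\<in>{c..e}. deriv a x \<noteq> 0 \<and> sqrt (A\<^sup>2 - (a x)\<^sup>2) \<noteq> 0 \<and> A + sqrt (A\<^sup>2 - (a x)\<^sup>2) \<noteq> 0"
            proof
              fix x assume x: "x \<in> {c..e}"
              then have x0: "0 < x" "x < \<tau>" using ce by auto
              show "deriv a x \<noteq> 0 \<and> sqrt (A\<^sup>2 - (a x)\<^sup>2) \<noteq> 0 \<and> A + sqrt (A\<^sup>2 - (a x)\<^sup>2) \<noteq> 0"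
              proof -
                have "0 < sqrt (A\<^sup>2 - (a x)\<^sup>2)" using inside(3)[OF x0] by (simp add: r_def)
                note s0 = this
                have g1: "deriv a x \<noteq> 0" using rsf_dpos[OF R x0(1)] by simp
                have g2: "sqrt (A\<^sup>2 - (a x)\<^sup>2) \<noteq> 0" using s0 by (metis less_irrefl)
                have "0 < A + sqrt (A\<^sup>2 - (a x)\<^sup>2)" using s0 A by linarith
                then have g3: "A + sqrt (A\<^sup>2 - (a x)\<^sup>2) \<noteq> 0" by (metis less_irrefl)
                show ?thesis using g1 g2 g3 by blast
              qed
            qed
            show ?thesis unfolding q_def k_def p_def r_def A_def[symmetric]
              using ca cd cdd nz by (intro continuous_intros) auto
          qed
          moreover have "continuous_on {c..e} q = continuous_on {c..e} q'"
            by (rule continuous_on_cong) (use eq in auto)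
          ultimately show ?thesis by simp
        qed
        have bnn: "0 \<le> q' x" if "x \<in> box c e" for x
        proof -
          have "x \<in> {0..\<tau>}" using that ce by (auto simp: box_real)
          then show ?thesis using q'nn by blast
        qed
        have cq': "continuous_on (cbox c e) q'" using cq by simp
        have ne: "box c e \<noteq> {}" using ce by simp
        have tin: "t \<in> cbox c e" using ce by simp
        have "q' t = 0"
          by (rule has_integral_0_cbox_imp_0[OF cq' bnn hz ne tin])
        then show ?thesis using t by (simp add: q'_def)
      qed
      have deq: "deriv a t = d * a t / A" if "0 < t" "t < \<tau>" for t
        using cmp[OF that] qz[OF that] by blast
      define \<psi> where "\<psi> t = a t * exp (- (d / A) * t)" for t
      have "\<psi> (\<tau>/2) = \<psi> 0"
      proof (rule DERIV_isconst_end[of 0 "\<tau>/2" \<psi>])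
        show "0 < \<tau>/2" using tau by simp
        have "continuous_on {0..\<tau>/2} a" using rsf_cont[OF R] by (rule continuous_on_subset) auto
        then show "continuous_on {0..\<tau>/2} \<psi>" unfolding \<psi>_def by (intro continuous_intros) auto
      next
        fix x assume x: "0 < x" "x < \<tau>/2"
        have l: "((\<lambda>t. - (d / A) * t) has_real_derivative - (d / A)) (at x)"
          using DERIV_cmult[OF DERIV_ident, of "- (d / A)"] by simp
        have ex: "((\<lambda>t. exp (- (d / A) * t)) has_real_derivative exp (- (d / A) * x) * (- (d / A))) (at x)"
          using DERIV_chain2[OF DERIV_exp l] .
        have "(\<psi> has_real_derivative deriv a x * exp (- (d / A) * x) + exp (- (d / A) * x) * (- (d / A)) * a x) (at x)"
          unfolding \<psi>_def by (rule DERIV_mult[OF rsf_D1[OF R x(1)] ex])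
        moreover have "deriv a x * exp (- (d / A) * x) + exp (- (d / A) * x) * (- (d / A)) * a x = 0"
        proof -
          have "deriv a x = d * a x / A" using deq[of x] x by simp
          then have "deriv a x * exp (- (d / A) * x) = exp (- (d / A) * x) * (d / A) * a x" by simp
          then show ?thesis by simp
        qed
        ultimately show "(\<psi> has_real_derivative 0) (at x)" by simp
      qed
      moreover have "\<psi> 0 = 0" by (simp add: \<psi>_def rsf_a0[OF R])
      moreover have "\<psi> (\<tau>/2) > 0" using rsf_pos[OF R, of "\<tau>/2"] tau by (simp add: \<psi>_def)
      ultimately show False by simp
    qed
    then show ?thesis by (simp add: g_tautau_M_def d_def)
  qed
qed
lemma vector4:
  "(vector [a,b,c,d] :: ('a::zero)^4) $ 1 = a"
  "(vector [a,b,c,d] :: ('a::zero)^4) $ 2 = b"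
  "(vector [a,b,c,d] :: ('a::zero)^4) $ 3 = c"
  "(vector [a,b,c,d] :: ('a::zero)^4) $ 4 = d"
  unfolding vector_def by simp_all

lemma e_gen:
  fixes u v \<rho> :: real
  assumes "\<rho>\<^sup>2 > 0" "u\<^sup>2 + v = \<rho>\<^sup>2"
  shows "1 + (-1/\<rho>\<^sup>2) * v = u/\<rho>\<^sup>2 * u"
proof -
  have "u/\<rho>\<^sup>2 * u = u\<^sup>2/\<rho>\<^sup>2" by (simp add: power2_eq_square)
  also have "u\<^sup>2 = \<rho>\<^sup>2 - v" using assms(2) by simp
  finally show ?thesis using assms(1) by (simp add: field_simps)
qed

lemma rank_lemma:
  fixes g x y z \<rho> :: real
  assumes g: "g \<noteq> 0" and rp: "\<rho> > 0" and s: "x\<^sup>2 + y\<^sup>2 + z\<^sup>2 = \<rho>\<^sup>2"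
  shows "rank (metric_matrix g (-1/\<rho>\<^sup>2) x y z) = 2"
proof -
  define M where "M = metric_matrix g (-1/\<rho>\<^sup>2) x y z"
  define r1 :: "real^4" where "r1 = vector [g,0,0,0]"
  define w :: "real^4" where "w = vector [0,x,y,z]"
  have rp2: "\<rho>\<^sup>2 > 0" using rp by simp
  have M1: "M $ 1 = r1"
    by (simp add: M_def metric_matrix_def r1_def vector4)
  have e1: "1 + (-1/\<rho>\<^sup>2) * (y\<^sup>2 + z\<^sup>2) = x/\<rho>\<^sup>2 * x"
    using rp2 s by (intro e_gen) auto
  have e2: "1 + (-1/\<rho>\<^sup>2) * (x\<^sup>2 + z\<^sup>2) = y/\<rho>\<^sup>2 * y"
    using rp2 s by (intro e_gen) auto
  have e3: "1 + (-1/\<rho>\<^sup>2) * (x\<^sup>2 + y\<^sup>2) = z/\<rho>\<^sup>2 * z"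
    using rp2 s by (intro e_gen) auto
  have M2: "M $ 2 = (x/\<rho>\<^sup>2) *\<^sub>R w"
    unfolding M_def metric_matrix_def w_def e1
    by (simp add: vector4 vec_eq_iff forall_4)
  have M3: "M $ 3 = (y/\<rho>\<^sup>2) *\<^sub>R w"
    unfolding M_def metric_matrix_def w_def e2
    by (simp add: vector4 vec_eq_iff forall_4)
  have M4: "M $ 4 = (z/\<rho>\<^sup>2) *\<^sub>R w"
    unfolding M_def metric_matrix_def w_def e3
    by (simp add: vector4 vec_eq_iff forall_4)
  have rows: "rows M = {r1, (x/\<rho>\<^sup>2) *\<^sub>R w, (y/\<rho>\<^sup>2) *\<^sub>R w, (z/\<rho>\<^sup>2) *\<^sub>R w}"
  proof -
    have "rows M = (\<lambda>i. M $ i) ` UNIV" by (auto simp: rows_def row_def vec_lambda_eta)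
    also have "\<dots> = {M$1, M$2, M$3, M$4}" by (simp add: UNIV_4)
    finally show ?thesis using M1 M2 M3 M4 by simp
  qed
  have wnz: "w \<noteq> 0"
  proof
    assume "w = 0"
    then have "x = 0 \<and> y = 0 \<and> z = 0" by (auto simp: w_def vec_eq_iff forall_4 vector4)
    with s rp2 show False by simp
  qed
  have r1nz: "r1 \<noteq> 0" using g by (auto simp: r1_def vec_eq_iff forall_4 vector4)
  have r1ns: "r1 \<notin> span {w}"
  proof
    assume "r1 \<in> span {w}"
    then obtain k where "r1 = k *\<^sub>R w" by (auto simp: span_singleton)
    then have "r1 $ 1 = k * w $ 1" by simp
    then show False using g by (simp add: r1_def w_def vector4)
  qed
  obtain c where c: "c \<noteq> 0" "c *\<^sub>R w \<in> rows M"
  proof -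
    have "x \<noteq> 0 \<or> y \<noteq> 0 \<or> z \<noteq> 0" using s rp2 by auto
    then consider "x \<noteq> 0" | "y \<noteq> 0" | "z \<noteq> 0" by blast
    then show ?thesis
    proof cases
      case 1 show ?thesis by (rule that[of "x/\<rho>\<^sup>2"]) (use 1 rp2 in \<open>auto simp: rows\<close>)
    next
      case 2 show ?thesis by (rule that[of "y/\<rho>\<^sup>2"]) (use 2 rp2 in \<open>auto simp: rows\<close>)
    next
      case 3 show ?thesis by (rule that[of "z/\<rho>\<^sup>2"]) (use 3 rp2 in \<open>auto simp: rows\<close>)
    qed
  qed
  have ind: "independent {r1, c *\<^sub>R w}"
  proof -
    have "r1 \<notin> span {c *\<^sub>R w}"
    proof
      assume "r1 \<in> span {c *\<^sub>R w}"
      then obtain k where "r1 = k *\<^sub>R (c *\<^sub>R w)" by (auto simp: span_singleton)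
      then have "r1 = (k * c) *\<^sub>R w" by simp
      then have "r1 \<in> span {w}" by (auto simp: span_singleton)
      with r1ns show False by blast
    qed
    moreover have "independent {c *\<^sub>R w}" using c wnz by (simp add: independent_insert)
    ultimately show ?thesis by (simp add: independent_insert)
  qed
  have "card {r1, c *\<^sub>R w} \<le> dim (rows M)"
    by (rule independent_card_le_dim[OF _ ind]) (use c in \<open>auto simp: rows\<close>)
  moreover have "card {r1, c *\<^sub>R w} = 2"
  proof -
    have "r1 \<noteq> c *\<^sub>R w"
    proof
      assume "r1 = c *\<^sub>R w"
      then have "r1 \<in> span {w}" by (auto simp: span_singleton)
      with r1ns show False by blast
    qed
    then show ?thesis by simp
  qed
  moreover have "dim (rows M) \<le> card {r1, w}"
    by (rule dim_le_card) (auto simp: rows span_base span_scale)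
  moreover have "card {r1, w} \<le> 2" by (simp add: card_insert_le_m1)
  ultimately show ?thesis unfolding M_def[symmetric] row_rank_def by linarith
qed

theorem corollary7p8:
  fixes a :: "real \<Rightarrow> real"
  assumes "regular_scale_factor a"
    and "\<forall>t. a (- t) = a t"
    and "(\<exists>L. 0 < L \<and> (deriv a \<longlongrightarrow> L) (at_right 0))
         \<or> ((a has_real_derivative 0) (at 0) \<and>
            (\<exists>n. has_nth_deriv_at a n 0 \<and> (deriv ^^ n) a 0 \<noteq> 0))"
  shows "\<forall>\<tau> x y z. \<tau> > 0 \<and> sqrt (x\<^sup>2 + y\<^sup>2 + z\<^sup>2) = rho_M a \<tau> \<longrightarrow>
           rank (metric_matrix (g_tautau_M a \<tau>) (lambda0_M a \<tau>) x y z) = 2"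
proof (intro allI impI)
  fix \<tau> x y z :: real
  assume H: "\<tau> > 0 \<and> sqrt (x\<^sup>2 + y\<^sup>2 + z\<^sup>2) = rho_M a \<tau>"
  define \<rho> where "\<rho> = rho_M a \<tau>"
  have tau: "\<tau> > 0" using H by simp
  have rp: "\<rho> > 0" using rho_pos[OF assms(1) tau] by (simp add: \<rho>_def)
  have "(sqrt (x\<^sup>2 + y\<^sup>2 + z\<^sup>2))\<^sup>2 = x\<^sup>2 + y\<^sup>2 + z\<^sup>2" by simp
  then have s: "x\<^sup>2 + y\<^sup>2 + z\<^sup>2 = \<rho>\<^sup>2" using H by (simp add: \<rho>_def)
  have l: "lambda0_M a \<tau> = -1 / \<rho>\<^sup>2"
    using gthth_zero[OF assms(1) assms(2) tau] rp
    by (simp add: lambda0_M_def \<rho>_def[symmetric] power2_eq_square power4_eq_xxxx)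
  show "rank (metric_matrix (g_tautau_M a \<tau>) (lambda0_M a \<tau>) x y z) = 2"
    unfolding l by (rule rank_lemma[OF gtt_nonzero[OF assms(1) tau] rp s])
qed

end
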